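(* Let $R$ be an integral domain with field of fractions $K$. If $d_1,\dots,d_n$ ($n\ge1$) are nonzero derivations on $R$ and $D=d_1\circ\cdots\circ d_n$, then $D/j$ (i.e. $x\mapsto D(x)/x$), as a map from the semigroup $R^*$ to $K$, is a generalized polynomial of degree at most $n$. If $R$ has characteristic zero, then $D/j$ has degree exactly $n$.
   Context: Rings are commutative with unit. A derivation on $R$ is a map $d\colon R\to R$ with $d(x+y)=d(x)+d(y)$ and $d(xy)=d(x)y+d(y)x$. $R^*$ is the abelian semigroup $R\setminus\{0\}$ under multiplication; $j$ is the identity map. For $f$ from an abelian semigroup $G$ to an abelian group, $\Delta_g f(x)=f(x\cdot g)-f(x)$ (using $G$'s operation); $f$ is a generalized polynomial if for some $k$, $\Delta_{g_1}\cdots\Delta_{g_{k+1}}f=0$ for all $g_i\in G$; its degree is the least such $k$ (the zero function has degree $-1$). *)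

theory Defs
  imports "HOL-Computational_Algebra.Fraction_Field"
begin

definition derivation :: "('a::comm_ring_1 \<Rightarrow> 'a) \<Rightarrow> bool" where
  "derivation d \<longleftrightarrow> (\<forall>x y. d (x + y) = d x + d y) \<and> (\<forall>x y. d (x * y) = d x * y + d y * x)"

definition Delta :: "'a::times \<Rightarrow> ('a \<Rightarrow> 'b::ab_group_add) \<Rightarrow> 'a \<Rightarrow> 'b" where
  "Delta g f = (\<lambda>x. f (x * g) - f x)"

fun Deltas :: "'a::times list \<Rightarrow> ('a \<Rightarrow> 'b::ab_group_add) \<Rightarrow> 'a \<Rightarrow> 'b" where
  "Deltas [] f = f"
| "Deltas (g # gs) f = Delta g (Deltas gs f)"

text \<open>f, viewed as a map on the subsemigroup S, satisfies
  Delta g1 ... Delta g(k+1) f = 0 on S for all g1..g(k+1) in S.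
  (For k = -1 this says f = 0 on S.)\<close>
definition gp_vanish :: "'a::times set \<Rightarrow> ('a \<Rightarrow> 'b::ab_group_add) \<Rightarrow> int \<Rightarrow> bool" where
  "gp_vanish S f k \<longleftrightarrow>
     (\<forall>gs. length gs = nat (k + 1) \<and> set gs \<subseteq> S \<longrightarrow> (\<forall>x\<in>S. Deltas gs f x = 0))"

definition gen_poly :: "'a::times set \<Rightarrow> ('a \<Rightarrow> 'b::ab_group_add) \<Rightarrow> bool" where
  "gen_poly S f \<longleftrightarrow> (\<exists>k\<ge>-1. gp_vanish S f k)"

definition gp_degree :: "'a::times set \<Rightarrow> ('a \<Rightarrow> 'b::ab_group_add) \<Rightarrow> int" where
  "gp_degree S f = (LEAST k. k \<ge> -1 \<and> gp_vanish S f k)"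

end

theory Submission
  imports Defs
begin

lemma Fract_den0: "Fract a 0 = 0"
  by (simp add: eq_fract(2) Zero_fract_def)

lemma Fract_num0: "Fract 0 a = 0"
  by (simp add: eq_fract(3) Zero_fract_def)

lemma Fract_eq0_iff: "b \<noteq> 0 \<Longrightarrow> Fract a b = 0 \<longleftrightarrow> a = 0"
  by (simp add: Zero_fract_def eq_fract(1))

lemma Fract_self: "b \<noteq> 0 \<Longrightarrow> Fract b b = 1"
  by (simp add: One_fract_def eq_fract(1))

lemma Fract_add_same: "(q::'a::idom) \<noteq> 0 \<Longrightarrow> Fract (a + b) q = Fract a q + Fract b q"
proof -
  assume q: "q \<noteq> 0"
  have "Fract a q + Fract b q = Fract (q * (a + b)) (q * q)"
    using q by (simp add: algebra_simps)
  also have "\<dots> = Fract (a + b) q" using q by (rule mult_fract_cancel)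
  finally show ?thesis by simp
qed

lemma Fract_sum_list:
  "(q::'a::idom) \<noteq> 0 \<Longrightarrow> Fract (sum_list (map f L)) q = sum_list (map (\<lambda>p. Fract (f p) q) L)"
  by (induction L) (simp_all add: Fract_add_same Fract_num0)

lemma Fract_sum_list_any:
  "Fract (sum_list (map f L)) (q::'a::idom) = sum_list (map (\<lambda>p. Fract (f p) q) L)"
  by (cases "q = 0") (simp_all add: Fract_sum_list Fract_den0)

lemma deriv_0: "derivation d \<Longrightarrow> d 0 = 0"
  unfolding derivation_def by (metis add_0 add_left_cancel add.right_neutral)

lemma deriv_sum_list:
  "derivation d \<Longrightarrow> d (sum_list (map f L)) = sum_list (map (\<lambda>p. d (f p)) L)"
  by (induction L) (simp_all add: deriv_0, simp add: derivation_def)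

definition Dl :: "('a \<Rightarrow> 'a) list \<Rightarrow> 'a \<Rightarrow> 'a" where
  "Dl ds = foldr (\<circ>) ds id"

lemma Dl_Nil[simp]: "Dl [] x = x" by (simp add: Dl_def)
lemma Dl_Cons[simp]: "Dl (d # ds) x = d (Dl ds x)" by (simp add: Dl_def)

fun splits :: "'b list \<Rightarrow> ('b list \<times> 'b list) list" where
  "splits [] = [([],[])]"
| "splits (d # ds) = map (\<lambda>p. (d # fst p, snd p)) (splits ds) @ map (\<lambda>p. (fst p, d # snd p)) (splits ds)"

lemma splits_hd: "splits ds = (ds, []) # tl (splits ds)"
proof (induction ds)
  case Nil then show ?case by simp
next
  case (Cons a ds)
  have "splits (a # ds) = map (\<lambda>p. (a # fst p, snd p)) ((ds, []) # tl (splits ds)) @ map (\<lambda>p. (fst p, a # snd p)) (splits ds)"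
    using Cons by (metis splits.simps(2))
  then show ?case by simp
qed

lemma splits_tl_snd: "p \<in> set (tl (splits ds)) \<Longrightarrow> snd p \<noteq> []"
proof (induction ds arbitrary: p)
  case Nil then show ?case by simp
next
  case (Cons d ds)
  have "splits (d # ds) = (d # ds, []) # (map (\<lambda>p. (d # fst p, snd p)) (tl (splits ds)) @ map (\<lambda>p. (fst p, d # snd p)) (splits ds))"
    by (subst splits.simps, subst splits_hd, simp)
  then have "p \<in> set (map (\<lambda>p. (d # fst p, snd p)) (tl (splits ds))) \<or> p \<in> set (map (\<lambda>p. (fst p, d # snd p)) (splits ds))"
    using Cons.prems by simp
  then show ?case using Cons.IH by auto
qed

lemma splits_len: "p \<in> set (splits ds) \<Longrightarrow> length (fst p) + length (snd p) = length ds"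
  by (induction ds arbitrary: p) auto

lemma splits_prod:
  fixes h :: "'b \<Rightarrow> 'c::comm_monoid_mult"
  shows "p \<in> set (splits ds) \<Longrightarrow> prod_list (map h (fst p)) * prod_list (map h (snd p)) = prod_list (map h ds)"
  by (induction ds arbitrary: p) (auto simp: algebra_simps)

lemma splits_count0: "length (filter (\<lambda>p. snd p = []) (splits ds)) = 1"
  by (induction ds) (simp_all add: filter_map o_def)

lemma splits_count1: "length (filter (\<lambda>p. length (snd p) = 1) (splits ds)) = length ds"
  by (induction ds) (simp_all add: filter_map o_def splits_count0)

lemma sum_list_if_const:
  "sum_list (map (\<lambda>p. if P p then c else 0) L) = of_nat (length (filter P L)) * (c::'c::semiring_1)"
  by (induction L) (simp_all add: algebra_simps)

lemma leibniz:
  assumes "\<forall>d\<in>set ds. derivation d"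
  shows "Dl ds (x * y) =
    sum_list (map (\<lambda>p. Dl (fst p) x * Dl (snd p) y) (splits ds))"
  using assms
proof (induction ds)
  case Nil then show ?case by simp
next
  case (Cons d ds)
  then have dd: "derivation d" by simp
  have "Dl (d # ds) (x * y) = d (Dl ds (x * y))" by simp
  also have "\<dots> = sum_list (map (\<lambda>p. d (Dl (fst p) x * Dl (snd p) y)) (splits ds))"
  proof -
    have "Dl ds (x * y) = sum_list (map (\<lambda>p. Dl (fst p) x * Dl (snd p) y) (splits ds))"
      using Cons.IH Cons.prems by simp
    then show ?thesis by (simp only: deriv_sum_list[OF dd])
  qed
  also have "\<dots> = sum_list (map (\<lambda>p. d (Dl (fst p) x) * Dl (snd p) y
       + Dl (fst p) x * d (Dl (snd p) y)) (splits ds))"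
    using dd unfolding derivation_def by (simp add: mult.commute)
  also have "\<dots> = sum_list (map (\<lambda>p. Dl (fst p) x * Dl (snd p) y) (splits (d # ds)))"
    by (simp add: o_def sum_list_addf)
  finally show ?case .
qed

definition phi :: "('a::idom \<Rightarrow> 'a) list \<Rightarrow> 'a \<Rightarrow> 'a fract" where
  "phi ds x = Fract (Dl ds x) x"

lemma phi_mult:
  assumes "\<forall>d\<in>set ds. derivation d"
  shows "phi ds (x * y) = sum_list (map (\<lambda>p. phi (fst p) x * phi (snd p) y) (splits ds))"
  unfolding phi_def leibniz[OF assms] Fract_sum_list_any by simp

lemma phi_Delta:
  assumes "\<forall>d\<in>set ds. derivation d" and "g \<noteq> 0"
  shows "Delta g (phi ds) = (\<lambda>x. sum_list (map (\<lambda>p. phi (fst p) x * phi (snd p) g) (tl (splits ds))))"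
proof
  fix x
  have "phi ds (x * g) = sum_list (map (\<lambda>p. phi (fst p) x * phi (snd p) g) ((ds, []) # tl (splits ds)))"
    using phi_mult[OF assms(1)] splits_hd by metis
  moreover have "phi [] g = 1" using assms(2) by (simp add: phi_def Fract_self)
  ultimately show "Delta g (phi ds) x = sum_list (map (\<lambda>p. phi (fst p) x * phi (snd p) g) (tl (splits ds)))"
    by (simp add: Delta_def)
qed

lemma Deltas_snoc: "Deltas (gs @ [g]) f = Deltas gs (Delta g f)"
  by (induction gs) simp_all

lemma Deltas_lin:
  fixes c :: "_ \<Rightarrow> 'b::comm_ring_1"
  shows "Deltas gs (\<lambda>x. sum_list (map (\<lambda>p. F p x * c p) L)) = (\<lambda>x. sum_list (map (\<lambda>p. Deltas gs (F p) x * c p) L))"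
proof (induction gs)
  case Nil then show ?case by simp
next
  case (Cons g gs)
  show ?case
  proof
    fix x
    show "Deltas (g # gs) (\<lambda>x. \<Sum>p\<leftarrow>L. F p x * c p) x = (\<Sum>p\<leftarrow>L. Deltas (g # gs) (F p) x * c p)"
      by (simp add: Cons Delta_def sum_list_subtractf[symmetric] left_diff_distrib)
  qed
qed

lemma vanish:
  assumes "\<forall>d\<in>set ds. derivation d" and "\<forall>g\<in>set gs. g \<noteq> 0" and "length ds < length gs"
  shows "Deltas gs (phi ds) = (\<lambda>x. 0)"
  using assms
proof (induction gs arbitrary: ds rule: rev_induct)
  case Nil then show ?case by simp
next
  case (snoc g gs)
  have "Deltas (gs @ [g]) (phi ds) = Deltas gs (Delta g (phi ds))" by (rule Deltas_snoc)
  also have "\<dots> = (\<lambda>x. sum_list (map (\<lambda>p. Deltas gs (phi (fst p)) x * phi (snd p) g) (tl (splits ds))))"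
    using snoc.prems by (simp add: phi_Delta Deltas_lin)
  also have "\<dots> = (\<lambda>x. sum_list (map (\<lambda>p. 0) (tl (splits ds))))"
  proof (rule ext, rule arg_cong[where f = sum_list], rule map_cong[OF refl])
    fix x p assume p: "p \<in> set (tl (splits ds))"
    then have ps: "p \<in> set (splits ds)" by (metis list.set_intros(2) splits_hd)
    have "snd p \<noteq> []" using p splits_tl_snd by blast
    then have "length (fst p) < length gs" using splits_len[OF ps] snoc.prems(3) by (cases "snd p") auto
    moreover have "\<forall>d\<in>set (fst p). derivation d"
      using snoc.prems(1) ps
      by (induction ds arbitrary: p) auto
    ultimately have "Deltas gs (phi (fst p)) = (\<lambda>x. 0)"
      using snoc.IH snoc.prems(2) by simp
    then show "Deltas gs (phi (fst p)) x * phi (snd p) g = 0" by simp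
  qed
  finally show ?case by simp
qed


lemma splits_set: "p \<in> set (splits ds) \<Longrightarrow> set (fst p) \<subseteq> set ds \<and> set (snd p) \<subseteq> set ds"
  by (induction ds arbitrary: p) (simp, fastforce)

lemma sum_list_zero_map: "sum_list (map (\<lambda>p. 0) L) = (0::'c::monoid_add)"
  by (induction L) simp_all

lemma in_tl_in: "p \<in> set (tl (splits ds)) \<Longrightarrow> p \<in> set (splits ds)"
  by (metis list.set_intros(2) splits_hd)

lemma Flemma:
  assumes "\<forall>d\<in>set ds. derivation d" "g \<noteq> 0" "x \<noteq> 0"
  shows "Deltas (replicate (length ds) g) (phi ds) x
       = of_nat (fact (length ds)) * prod_list (map (\<lambda>d. Fract (d g) g) ds)"
  using assms
proof (induction "length ds" arbitrary: ds x rule: less_induct)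
  case less
  define h where "h = (\<lambda>d. Fract (d g) g)"
  show ?case
  proof (cases ds)
    case Nil
    then show ?thesis using less.prems by (simp add: phi_def Fract_self)
  next
    case (Cons d es)
    define k where "k = length es"
    define S where "S = splits es"
    have des: "\<forall>e\<in>set es. derivation e" using less.prems Cons by simp
    have gs0: "\<forall>g'\<in>set (replicate k g). g' \<noteq> 0" using less.prems by simp
    have rep: "replicate (length ds) g = replicate k g @ [g]"
      using Cons k_def by (simp add: replicate_append_same)
    have tlS: "tl (splits ds) = map (\<lambda>p. (d # fst p, snd p)) (tl S) @ map (\<lambda>p. (fst p, d # snd p)) S"
      unfolding Cons S_def by (subst splits.simps, subst splits_hd, simp)
    have "Deltas (replicate (length ds) g) (phi ds) x
        = Deltas (replicate k g) (Delta g (phi ds)) x" by (simp add: rep Deltas_snoc)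
    also have "\<dots> = sum_list (map (\<lambda>p. Deltas (replicate k g) (phi (fst p)) x * phi (snd p) g) (tl (splits ds)))"
      using less.prems by (simp add: phi_Delta Deltas_lin)
    also have "\<dots> = sum_list (map (\<lambda>p. Deltas (replicate k g) (phi (d # fst p)) x * phi (snd p) g) (tl S))
        + sum_list (map (\<lambda>p. Deltas (replicate k g) (phi (fst p)) x * phi (d # snd p) g) S)"
      by (simp add: tlS o_def)
    also have "sum_list (map (\<lambda>p. Deltas (replicate k g) (phi (d # fst p)) x * phi (snd p) g) (tl S))
        = sum_list (map (\<lambda>p. if length (snd p) = 1 then of_nat (fact k) * (h d * prod_list (map h es)) else 0) (tl S))"
    proof (rule arg_cong[where f = sum_list], rule map_cong[OF refl])
      fix p assume p: "p \<in> set (tl S)"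
      then have ps: "p \<in> set (splits es)" unfolding S_def by (rule in_tl_in)
      have sn: "snd p \<noteq> []" using p splits_tl_snd unfolding S_def by blast
      have len: "length (fst p) + length (snd p) = k" using splits_len[OF ps] k_def by simp
      have dfs: "\<forall>e\<in>set (d # fst p). derivation e" using splits_set[OF ps] des less.prems Cons by auto
      show "Deltas (replicate k g) (phi (d # fst p)) x * phi (snd p) g
          = (if length (snd p) = 1 then of_nat (fact k) * (h d * prod_list (map h es)) else 0)"
      proof (cases "length (snd p) = 1")
        case True
        then obtain e where e: "snd p = [e]" by (cases "snd p") auto
        have lk: "length (d # fst p) = k" using len True by simp
        have "Deltas (replicate (length (d # fst p)) g) (phi (d # fst p)) x = of_nat (fact (length (d # fst p))) * prod_list (map (\<lambda>d. Fract (d g) g) (d # fst p))"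
          by (rule less.hyps) (use lk k_def Cons dfs less.prems in auto)
        then have "Deltas (replicate k g) (phi (d # fst p)) x = of_nat (fact k) * prod_list (map h (d # fst p))"
          unfolding lk h_def .
        moreover have "phi (snd p) g = prod_list (map h (snd p))" using e by (simp add: phi_def h_def)
        moreover have "prod_list (map h (fst p)) * prod_list (map h (snd p)) = prod_list (map h es)"
          using splits_prod[OF ps] by blast
        ultimately show ?thesis using True by (simp add: algebra_simps)
      next
        case False
        then have "length (d # fst p) < length (replicate k g)" using len sn by (cases "snd p") auto
        then have "Deltas (replicate k g) (phi (d # fst p)) = (\<lambda>x. 0)"
          using vanish[OF dfs gs0] by blast
        then show ?thesis using False by simp
      qed
    qed
    also have "\<dots> = of_nat k * (of_nat (fact k) * (h d * prod_list (map h es)))"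
    proof -
      have "length (filter (\<lambda>p. length (snd p) = 1) S) = k" unfolding S_def k_def by (rule splits_count1)
      moreover obtain T where T: "S = (es, []) # T" unfolding S_def using splits_hd by blast
      ultimately have "length (filter (\<lambda>p. length (snd p) = 1) (tl S)) = k" by simp
      then show ?thesis by (simp add: sum_list_if_const)
    qed
    also have "sum_list (map (\<lambda>p. Deltas (replicate k g) (phi (fst p)) x * phi (d # snd p) g) S)
        = of_nat (fact k) * prod_list (map h es) * h d"
    proof -
      have S: "S = (es, []) # tl S" unfolding S_def by (rule splits_hd)
      have "sum_list (map (\<lambda>p. Deltas (replicate k g) (phi (fst p)) x * phi (d # snd p) g) (tl S))
          = sum_list (map (\<lambda>p. 0) (tl S))"
      proof (rule arg_cong[where f = sum_list], rule map_cong[OF refl])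
        fix p assume p: "p \<in> set (tl S)"
        then have ps: "p \<in> set (splits es)" unfolding S_def by (rule in_tl_in)
        have sn: "snd p \<noteq> []" using p splits_tl_snd unfolding S_def by blast
        have len: "length (fst p) + length (snd p) = k" using splits_len[OF ps] k_def by simp
        have dfs: "\<forall>e\<in>set (fst p). derivation e" using splits_set[OF ps] des by auto
        have "length (fst p) < length (replicate k g)" using len sn by (cases "snd p") auto
        then have "Deltas (replicate k g) (phi (fst p)) = (\<lambda>x. 0)"
          using vanish[OF dfs gs0] by blast
        then show "Deltas (replicate k g) (phi (fst p)) x * phi (d # snd p) g = 0" by simp
      qed
      moreover have "Deltas (replicate (length es) g) (phi es) x = of_nat (fact (length es)) * prod_list (map (\<lambda>d. Fract (d g) g) es)"
        by (rule less.hyps) (auto simp: Cons des less.prems)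
      then have IHes: "Deltas (replicate k g) (phi es) x = of_nat (fact k) * prod_list (map h es)"
        unfolding k_def h_def .
      moreover have "phi [d] g = h d" by (simp add: phi_def h_def)
      ultimately show ?thesis using IHes by (subst S, simp add: sum_list_zero_map)
    qed
    finally have fin: "Deltas (replicate (length ds) g) (phi ds) x = of_nat k * (of_nat (fact k) * (h d * prod_list (map h es))) + of_nat (fact k) * prod_list (map h es) * h d" .
    have "of_nat k * (of_nat (fact k) * (h d * prod_list (map h es))) + of_nat (fact k) * prod_list (map h es) * h d
        = (of_nat (fact (Suc k)) :: 'a fract) * (h d * prod_list (map h es))"
      by (simp add: algebra_simps)
    then show ?thesis using fin unfolding Cons k_def h_def by simp
  qed
qed

lemma char0_inj:
  assumes "CHAR('a::comm_ring_1) = 0" "(of_nat m :: 'a) = of_nat m'"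
  shows "m = m'"
proof -
  { fix m m' :: nat assume le: "m' \<le> m" and eq: "(of_nat m :: 'a) = of_nat m'"
    have "(of_nat m :: 'a) = of_nat (m - m') + of_nat m'" using le by (simp flip: of_nat_add)
    then have "(of_nat (m - m') :: 'a) = 0" using eq by simp
    then have "m - m' = 0" using assms(1) of_nat_eq_0_iff_char_dvd by (metis dvd_0_left_iff)
    then have "m = m'" using le by simp }
  then show ?thesis using assms(2) by (metis nat_le_linear)
qed

lemma deriv_nat_mult: "derivation e \<Longrightarrow> e (of_nat m * a) = of_nat m * e a"
  by (induction m) (simp_all add: deriv_0 distrib_right, simp add: derivation_def)

lemma bad_finite:
  fixes e :: "'a::idom \<Rightarrow> 'a"
  assumes "derivation e" "CHAR('a) = 0" "e g0 \<noteq> 0 \<or> e a \<noteq> 0"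
  shows "finite {m::nat. e (g0 + of_nat m * a) = 0}"
proof -
  have eq: "\<And>m. e (g0 + of_nat m * a) = e g0 + of_nat m * e a"
    using assms(1) deriv_nat_mult[OF assms(1)] unfolding derivation_def by simp
  show ?thesis
  proof (cases "e a = 0")
    case True
    then show ?thesis using assms(3) eq by simp
  next
    case False
    show ?thesis
    proof (cases "{m::nat. e (g0 + of_nat m * a) = 0} = {}")
      case True then show ?thesis by simp
    next
      case ne: False
      then obtain m0 where m0: "e g0 + of_nat m0 * e a = 0" using eq by auto
      have "{m::nat. e (g0 + of_nat m * a) = 0} \<subseteq> {m0}"
      proof
        fix m assume "m \<in> {m::nat. e (g0 + of_nat m * a) = 0}"
        then have "e g0 + of_nat m * e a = 0" using eq by simp
        with m0 have "of_nat m * e a = of_nat m0 * e a" by (metis add_left_cancel)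
        then have "(of_nat m :: 'a) = of_nat m0" using False by simp
        then show "m \<in> {m0}" using char0_inj[OF assms(2)] by simp
      qed
      then show ?thesis by (rule finite_subset) simp
    qed
  qed
qed

lemma good_g:
  fixes ds :: "('a::idom \<Rightarrow> 'a) list"
  assumes "CHAR('a) = 0" "\<forall>d\<in>set ds. derivation d \<and> d \<noteq> (\<lambda>_. 0)"
  shows "\<exists>g. g \<noteq> 0 \<and> (\<forall>d\<in>set ds. d g \<noteq> 0)"
  using assms(2)
proof (induction ds)
  case Nil then show ?case by (intro exI[of _ 1]) simp
next
  case (Cons d ds)
  then obtain g0 where g0: "g0 \<noteq> 0" "\<forall>e\<in>set ds. e g0 \<noteq> 0" by auto
  have dd: "derivation d" "d \<noteq> (\<lambda>_. 0)" using Cons.prems by auto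
  then obtain a where a: "d a \<noteq> 0" by (metis (mono_tags) ext)
  have fin: "finite (\<Union>e\<in>set (d # ds). {m::nat. e (g0 + of_nat m * a) = 0})"
  proof (rule finite_UN_I)
    show "finite (set (d # ds))" by simp
    fix e assume "e \<in> set (d # ds)"
    then show "finite {m::nat. e (g0 + of_nat m * a) = 0}"
      using bad_finite[OF _ assms(1)] Cons.prems g0 a by auto
  qed
  obtain m where m: "m \<notin> (\<Union>e\<in>set (d # ds). {m::nat. e (g0 + of_nat m * a) = 0})"
    using ex_new_if_finite[OF infinite_UNIV_nat fin] by blast
  define g where "g = g0 + of_nat m * a"
  have all: "\<forall>e\<in>set (d # ds). e g \<noteq> 0" using m g_def by auto
  then have "g \<noteq> 0" using deriv_0[OF dd(1)] by auto
  then show ?case using all by blast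
qed

lemma int_least:
  fixes P :: "int \<Rightarrow> bool"
  assumes "P n" "\<forall>k. P k \<longrightarrow> -1 \<le> k"
  shows "(LEAST k. P k) \<le> n"
proof -
  define Q where "Q = (\<lambda>m::nat. P (int m - 1))"
  have "-1 \<le> n" using assms by blast
  then have "int (nat (n + 1)) - 1 = n" by simp
  then have Qn: "Q (nat (n + 1))" using assms(1) unfolding Q_def by simp
  define m0 where "m0 = (LEAST m. Q m)"
  have Qm0: "Q m0" unfolding m0_def by (rule LeastI[of Q, OF Qn])
  have "(LEAST k. P k) = int m0 - 1"
  proof (rule Least_equality)
    show "P (int m0 - 1)" using Qm0 Q_def by simp
    fix y assume "P y"
    then have "-1 \<le> y" using assms(2) by blast
    then have "Q (nat (y + 1))" using \<open>P y\<close> unfolding Q_def by simp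
    then have "m0 \<le> nat (y + 1)" unfolding m0_def by (rule Least_le)
    then show "int m0 - 1 \<le> y" using \<open>-1 \<le> y\<close> by linarith
  qed
  moreover have "m0 \<le> nat (n + 1)" unfolding m0_def by (rule Least_le[of Q, OF Qn])
  ultimately show ?thesis using \<open>-1 \<le> n\<close> by linarith
qed

lemma gp_mono1:
  assumes "gp_vanish {x::'a::idom. x \<noteq> 0} f k" "-1 \<le> k"
  shows "gp_vanish {x::'a. x \<noteq> 0} f (k + 1)"
  unfolding gp_vanish_def
proof (intro allI impI ballI)
  fix gs :: "'a list" and x :: 'a assume gs: "length gs = nat (k + 1 + 1) \<and> set gs \<subseteq> {x. x \<noteq> 0}"
    and x: "x \<in> {x. x \<noteq> 0}"
  have "nat (k + 1 + 1) = Suc (nat (k + 1))" using assms(2)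
    by (subst Suc_nat_eq_nat_zadd1) (simp_all add: ac_simps)
  then have "length gs = Suc (nat (k + 1))" using gs by simp
  then obtain g gs' where gg: "gs = g # gs'" by (cases gs) auto
  have l: "length gs' = nat (k + 1)" "set gs' \<subseteq> {x. x \<noteq> 0}" "g \<noteq> 0" using gs gg assms(2) by auto
  have "x * g \<noteq> 0" using x l by simp
  then show "Deltas gs f x = 0" using assms(1) l x gg unfolding gp_vanish_def by (simp add: Delta_def)
qed

lemma gp_mono:
  assumes "gp_vanish {x::'a::idom. x \<noteq> 0} f k" "-1 \<le> k"
  shows "gp_vanish {x::'a. x \<noteq> 0} f (k + int j)"
proof (induction j)
  case 0 then show ?case using assms by simp
next
  case (Suc j)
  have "-1 \<le> k + int j" using assms(2) by simp
  then have "gp_vanish {x::'a. x \<noteq> 0} f (k + int j + 1)" using gp_mono1[OF Suc] by simp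
  then show ?case by (simp add: ac_simps)
qed

theorem lemma2p4:
  fixes ds :: "('a::idom \<Rightarrow> 'a) list"
  assumes "length ds \<ge> 1"
    and "\<forall>d\<in>set ds. derivation d \<and> d \<noteq> (\<lambda>_. 0)"
  defines "D \<equiv> foldr (\<circ>) ds id"
  shows "gen_poly {x::'a. x \<noteq> 0} (\<lambda>x. Fract (D x) x)
         \<and> gp_degree {x::'a. x \<noteq> 0} (\<lambda>x. Fract (D x) x) \<le> int (length ds)
         \<and> (CHAR('a) = 0 \<longrightarrow> gp_degree {x::'a. x \<noteq> 0} (\<lambda>x. Fract (D x) x) = int (length ds))"
proof -
  have fphi: "(\<lambda>x. Fract (D x) x) = phi ds" by (rule ext) (simp add: phi_def D_def Dl_def)
  have der: "\<forall>d\<in>set ds. derivation d" using assms(2) by blast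
  define n where "n = length ds"
  define P where "P = (\<lambda>k. k \<ge> -1 \<and> gp_vanish {x::'a. x \<noteq> 0} (phi ds) k)"
  have V: "gp_vanish {x::'a. x \<noteq> 0} (phi ds) (int n)"
    unfolding gp_vanish_def
  proof (intro allI impI ballI)
    fix gs :: "'a list" and x assume gs: "length gs = nat (int n + 1) \<and> set gs \<subseteq> {x. x \<noteq> 0}"
    have "\<forall>g\<in>set gs. g \<noteq> 0" using gs by auto
    moreover have "length ds < length gs" using gs n_def by simp
    ultimately have "Deltas gs (phi ds) = (\<lambda>x. 0)" using vanish[OF der] by blast
    then show "Deltas gs (phi ds) x = 0" by simp
  qed
  have Pn: "P (int n)" using V P_def by simp
  have gp: "gen_poly {x::'a. x \<noteq> 0} (phi ds)" unfolding gen_poly_def using V by (intro exI[of _ "int n"]) simp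
  have deg: "gp_degree {x::'a. x \<noteq> 0} (phi ds) = (LEAST k. P k)" unfolding gp_degree_def P_def by simp
  have le: "(LEAST k. P k) \<le> int n" using int_least[of P "int n"] Pn P_def by blast
  have ch: "CHAR('a) = 0 \<longrightarrow> (LEAST k. P k) = int n"
  proof
    assume c0: "CHAR('a) = 0"
    obtain g :: 'a where g: "g \<noteq> 0" "\<forall>d\<in>set ds. d g \<noteq> 0" using good_g[OF c0 assms(2)] by blast
    have F: "Deltas (replicate n g) (phi ds) 1 = of_nat (fact n) * prod_list (map (\<lambda>d. Fract (d g) g) ds)"
      using Flemma[OF der g(1)] n_def by simp
    have nz1: "(of_nat (fact n) :: 'a fract) \<noteq> 0"
      using c0 by (simp add: of_nat_fract Fract_eq0_iff of_nat_eq_0_iff_char_dvd)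
    have nz2: "prod_list (map (\<lambda>d. Fract (d g) g) ds) \<noteq> 0"
      using g by (auto simp: prod_list_zero_iff Fract_eq0_iff)
    have Fnz: "Deltas (replicate n g) (phi ds) 1 \<noteq> 0" using F nz1 nz2 by simp
    show "(LEAST k. P k) = int n"
    proof (rule Least_equality)
      show "P (int n)" by (rule Pn)
      fix k assume Pk: "P k"
      show "int n \<le> k"
      proof (rule ccontr)
        assume "\<not> int n \<le> k"
        then have "gp_vanish {x::'a. x \<noteq> 0} (phi ds) (k + int (nat (int n - 1 - k)))"
          using Pk P_def gp_mono by blast
        moreover have "k + int (nat (int n - 1 - k)) = int n - 1" using \<open>\<not> int n \<le> k\<close> by linarith
        ultimately have "gp_vanish {x::'a. x \<noteq> 0} (phi ds) (int n - 1)" by simp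
        moreover have "nat (int n - 1 + 1) = n" by simp
        ultimately have vv: "\<forall>gs. length gs = n \<and> set gs \<subseteq> {x::'a. x \<noteq> 0} \<longrightarrow> (\<forall>x\<in>{x::'a. x \<noteq> 0}. Deltas gs (phi ds) x = 0)"
          unfolding gp_vanish_def by metis
        have "set (replicate n g) \<subseteq> {x::'a. x \<noteq> 0}" using g(1) by auto
        then have "Deltas (replicate n g) (phi ds) 1 = 0" using vv by simp
        then show False using Fnz by simp
      qed
    qed
  qed
  show ?thesis unfolding fphi using gp deg le ch n_def by simp
qed

end
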